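(* Let $\mathcal X=\mathbb R^d$, $\sigma>0$, $\varepsilon>0$. Suppose $F:\mathcal P_2(\mathbb R^d)\to\mathbb R$ satisfies $F\ge F_{\min}$, $\xi$ is as below, and $\pi=e^{-U}$ is a probability density with $U(x)\ge C_0+C_1|x|^2$ for all $x$, for some $C_0\in\mathbb R$, $C_1>0$. Then for all $m\in\mathcal P_2(\mathbb R^d)$ and all $\delta>0$, $$\frac1\sigma V^\sigma_\varepsilon(m)\ \ge\ \frac1\sigma F_{\min}+C_0+C_1M_2(m)-\Big(\frac{2\pi}{\delta}\Big)^{d/2}-2\delta\big(M_2(m)+\varepsilon^2M_2(\xi)\big),$$ where $V^\sigma_\varepsilon(m)=F(m)+\sigma\int\log\frac{(K_\varepsilon*m)(x)}{\pi(x)}\,m(dx)$.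
   Context: $\xi:\mathbb R^d\to\mathbb R_+$ is a smooth, Lipschitz, radial probability density with full support and finite second moment; $\xi_\varepsilon(z)=\varepsilon^{-d}\xi(z/\varepsilon)$; $K_\varepsilon=\xi_\varepsilon*\xi_\varepsilon$; $(K_\varepsilon*m)(x)=\int K_\varepsilon(x-y)m(dy)$. $M_2(m)=\int|x|^2m(dx)$ and $M_2(\xi)=\int|z|^2\xi(z)dz$; here $\pi$ in $(2\pi/\delta)^{d/2}$ denotes the number $3.14159\ldots$. *)

theory Defs
  imports "HOL-Probability.Probability"
begin

coinductive smooth_fun :: "('a::euclidean_space \<Rightarrow> real) \<Rightarrow> bool" where
  "(\<forall>x. f differentiable (at x)) \<Longrightarrow>
   (\<forall>b\<in>Basis. smooth_fun (\<lambda>x. frechet_derivative f (at x) b)) \<Longrightarrow> smooth_fun f"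

definition P2 :: "'a::euclidean_space measure \<Rightarrow> bool" where
  "P2 m \<longleftrightarrow> prob_space m \<and> sets m = sets borel \<and> integrable m (\<lambda>x. (norm x)\<^sup>2)"

definition M2 :: "'a::euclidean_space measure \<Rightarrow> real" where
  "M2 m = (\<integral>x. (norm x)\<^sup>2 \<partial>m)"

definition M2_dens :: "('a::euclidean_space \<Rightarrow> real) \<Rightarrow> real" where
  "M2_dens \<xi> = (\<integral>z. (norm z)\<^sup>2 * \<xi> z \<partial>lborel)"

definition ext_integral :: "'a measure \<Rightarrow> ('a \<Rightarrow> real) \<Rightarrow> ereal" where
  "ext_integral M f = enn2ereal (\<integral>\<^sup>+x. ennreal (max 0 (f x)) \<partial>M)
                      - enn2ereal (\<integral>\<^sup>+x. ennreal (max 0 (- f x)) \<partial>M)"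

definition mollifier :: "real \<Rightarrow> ('a::euclidean_space \<Rightarrow> real) \<Rightarrow> 'a \<Rightarrow> real" where
  "mollifier \<epsilon> \<xi> z = \<epsilon> powr (- real DIM('a)) * \<xi> (z /\<^sub>R \<epsilon>)"

definition kernelK :: "real \<Rightarrow> ('a::euclidean_space \<Rightarrow> real) \<Rightarrow> 'a \<Rightarrow> real" where
  "kernelK \<epsilon> \<xi> x = (\<integral>y. mollifier \<epsilon> \<xi> (x - y) * mollifier \<epsilon> \<xi> y \<partial>lborel)"

definition convK :: "real \<Rightarrow> ('a::euclidean_space \<Rightarrow> real) \<Rightarrow> 'a measure \<Rightarrow> 'a \<Rightarrow> real" where
  "convK \<epsilon> \<xi> m x = (\<integral>y. kernelK \<epsilon> \<xi> (x - y) \<partial>m)"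

definition Vfun :: "('a::euclidean_space measure \<Rightarrow> real) \<Rightarrow> real \<Rightarrow> real \<Rightarrow> ('a \<Rightarrow> real)
    \<Rightarrow> ('a \<Rightarrow> real) \<Rightarrow> 'a measure \<Rightarrow> ereal" where
  "Vfun F \<sigma> \<epsilon> \<xi> p m = ereal (F m) + ereal \<sigma> * ext_integral m (\<lambda>x. ln (convK \<epsilon> \<xi> m x / p x))"

end

theory Submission
  imports Defs
begin


lemma nn_integral_affine_eucl:
  fixes f :: "'a::euclidean_space \<Rightarrow> ennreal"
  assumes [measurable]: "f \<in> borel_measurable borel" and c: "c \<noteq> 0"
  shows "(\<integral>\<^sup>+x. f x \<partial>lborel) = ennreal (\<bar>c\<bar> ^ DIM('a)) * (\<integral>\<^sup>+x. f (t + c *\<^sub>R x) \<partial>lborel)"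
  by (subst lborel_affine[OF c, of t]) (simp add: nn_integral_density nn_integral_distr nn_integral_cmult)

lemma nn_integral_reflect:
  fixes f :: "'a::euclidean_space \<Rightarrow> ennreal"
  assumes [measurable]: "f \<in> borel_measurable borel"
  shows "(\<integral>\<^sup>+y. f (x - y) \<partial>lborel) = (\<integral>\<^sup>+y. f y \<partial>lborel)"
  using nn_integral_affine_eucl[of f "-1" x] by simp

lemma nn_integral_shift:
  fixes f :: "'a::euclidean_space \<Rightarrow> ennreal"
  assumes [measurable]: "f \<in> borel_measurable borel"
  shows "(\<integral>\<^sup>+y. f (t + y) \<partial>lborel) = (\<integral>\<^sup>+y. f y \<partial>lborel)"
  using nn_integral_affine_eucl[of f "1" t] by simp

lemma ennreal_max0: "ennreal (max 0 x) = ennreal x"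
  by (cases "x \<ge> 0") (auto simp: max_def ennreal_neg)

lemma ereal_minus_top_test: "(\<infinity>::ereal) - \<infinity> = \<infinity>" by simp

lemma ennreal_mult_div_le: "(a::ennreal) * (b / a) \<le> b"
proof (cases "a = 0")
  case False
  show ?thesis
  proof (cases "a = top")
    case True then show ?thesis by simp
  next
    case False2: False
    then show ?thesis using False
      by (metis ennreal_times_divide mult.commute mult_divide_eq_ennreal order_refl)
  qed
qed simp


locale moll =
  fixes \<epsilon> :: real and \<xi> :: "'a::euclidean_space \<Rightarrow> real" and L :: real
  assumes eps: "\<epsilon> > 0"
    and lip: "L-lipschitz_on UNIV \<xi>"
    and radial: "\<And>x y. norm x = norm y \<Longrightarrow> \<xi> x = \<xi> y"
    and nonneg: "\<And>z. \<xi> z \<ge> 0"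
    and xint: "integrable lborel \<xi>" and xone: "(\<integral>z. \<xi> z \<partial>lborel) = 1"
    and xM2: "integrable lborel (\<lambda>z. (norm z)\<^sup>2 * \<xi> z)"
begin

abbreviation "\<phi> \<equiv> mollifier \<epsilon> \<xi>"

lemma xi_meas[measurable]: "\<xi> \<in> borel_measurable borel"
  using lipschitz_on_continuous_on[OF lip] by (intro borel_measurable_continuous_onI) simp

lemma phi_meas[measurable]: "\<phi> \<in> borel_measurable borel"
  unfolding mollifier_def[abs_def] by measurable

lemma phi_nonneg[simp]: "\<phi> z \<ge> 0"
  unfolding mollifier_def using nonneg by simp

lemma phi_sym: "\<phi> (- z) = \<phi> z"
proof -
  have "\<xi> ((- z) /\<^sub>R \<epsilon>) = \<xi> (z /\<^sub>R \<epsilon>)" by (rule radial) simp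
  then show ?thesis unfolding mollifier_def by simp
qed

lemma phi_sym2: "\<phi> (x - y) = \<phi> (y - x)"
  using phi_sym[of "y - x"] by simp

lemma nn_phi_scale:
  fixes h :: "'a \<Rightarrow> real"
  assumes [measurable]: "h \<in> borel_measurable borel"
  shows "(\<integral>\<^sup>+z. ennreal (\<phi> z * h z) \<partial>lborel) = (\<integral>\<^sup>+x. ennreal (\<xi> x * h (\<epsilon> *\<^sub>R x)) \<partial>lborel)"
proof -
  have "(\<integral>\<^sup>+z. ennreal (\<phi> z * h z) \<partial>lborel)
     = ennreal (\<bar>\<epsilon>\<bar> ^ DIM('a)) * (\<integral>\<^sup>+x. ennreal (\<phi> (0 + \<epsilon> *\<^sub>R x) * h (0 + \<epsilon> *\<^sub>R x)) \<partial>lborel)"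
    using eps by (intro nn_integral_affine_eucl) auto
  also have "\<dots> = (\<integral>\<^sup>+x. ennreal (\<bar>\<epsilon>\<bar> ^ DIM('a)) * ennreal (\<phi> (\<epsilon> *\<^sub>R x) * h (\<epsilon> *\<^sub>R x)) \<partial>lborel)"
    by (subst nn_integral_cmult) auto
  also have "\<dots> = (\<integral>\<^sup>+x. ennreal (\<xi> x * h (\<epsilon> *\<^sub>R x)) \<partial>lborel)"
  proof (intro nn_integral_cong)
    fix x :: 'a
    have "\<bar>\<epsilon>\<bar> ^ DIM('a) * (\<epsilon> powr (- real DIM('a))) = 1"
      using eps by (simp add: powr_minus powr_realpow field_simps)
    moreover have "(\<epsilon> *\<^sub>R x) /\<^sub>R \<epsilon> = x" using eps by (simp add: scaleR_scaleR divide_inverse_commute)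
    moreover have "\<bar>\<epsilon>\<bar> ^ DIM('a) * (\<phi> (\<epsilon> *\<^sub>R x) * h (\<epsilon> *\<^sub>R x))
       = (\<bar>\<epsilon>\<bar> ^ DIM('a) * (\<epsilon> powr (- real DIM('a)))) * \<xi> ((\<epsilon> *\<^sub>R x) /\<^sub>R \<epsilon>) * h (\<epsilon> *\<^sub>R x)"
      unfolding mollifier_def by (simp only: mult_ac)
    ultimately have eq: "\<bar>\<epsilon>\<bar> ^ DIM('a) * (\<phi> (\<epsilon> *\<^sub>R x) * h (\<epsilon> *\<^sub>R x)) = \<xi> x * h (\<epsilon> *\<^sub>R x)"
      by simp
    have "ennreal (\<bar>\<epsilon>\<bar> ^ DIM('a)) * ennreal (\<phi> (\<epsilon> *\<^sub>R x) * h (\<epsilon> *\<^sub>R x))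
        = ennreal (\<bar>\<epsilon>\<bar> ^ DIM('a) * (\<phi> (\<epsilon> *\<^sub>R x) * h (\<epsilon> *\<^sub>R x)))"
      by (rule ennreal_mult'[symmetric]) simp
    then show "ennreal (\<bar>\<epsilon>\<bar> ^ DIM('a)) * ennreal (\<phi> (\<epsilon> *\<^sub>R x) * h (\<epsilon> *\<^sub>R x)) = ennreal (\<xi> x * h (\<epsilon> *\<^sub>R x))"
      using eq by simp
  qed
  finally show ?thesis .
qed

lemma phi_int: "(\<integral>\<^sup>+z. ennreal (\<phi> z) \<partial>lborel) = 1"
proof -
  have "(\<integral>\<^sup>+z. ennreal (\<phi> z) \<partial>lborel) = (\<integral>\<^sup>+z. ennreal (\<phi> z * 1) \<partial>lborel)" by simp
  also have "\<dots> = (\<integral>\<^sup>+x. ennreal (\<xi> x * 1) \<partial>lborel)" by (rule nn_phi_scale) simp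
  also have "\<dots> = ennreal (\<integral>x. \<xi> x \<partial>lborel)"
    using xint nonneg by (simp add: nn_integral_eq_integral)
  finally show ?thesis using xone by simp
qed

lemma M2d_nonneg: "M2_dens \<xi> \<ge> 0"
  unfolding M2_dens_def using nonneg by (intro integral_nonneg_AE) auto

lemma phi_M2: "(\<integral>\<^sup>+z. ennreal (\<phi> z * (norm z)\<^sup>2) \<partial>lborel) = ennreal (\<epsilon>\<^sup>2 * M2_dens \<xi>)"
proof -
  have "(\<integral>\<^sup>+z. ennreal (\<phi> z * (norm z)\<^sup>2) \<partial>lborel) = (\<integral>\<^sup>+x. ennreal (\<xi> x * (norm (\<epsilon> *\<^sub>R x))\<^sup>2) \<partial>lborel)"
    by (rule nn_phi_scale) simp
  also have "\<dots> = (\<integral>\<^sup>+x. ennreal (\<epsilon>\<^sup>2) * ennreal ((norm x)\<^sup>2 * \<xi> x) \<partial>lborel)"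
    using eps by (intro nn_integral_cong) (subst ennreal_mult[symmetric], auto simp: nonneg power_mult_distrib mult_ac)
  also have "\<dots> = ennreal (\<epsilon>\<^sup>2) * (\<integral>\<^sup>+x. ennreal ((norm x)\<^sup>2 * \<xi> x) \<partial>lborel)"
    using xM2 by (intro nn_integral_cmult) auto
  also have "(\<integral>\<^sup>+x. ennreal ((norm x)\<^sup>2 * \<xi> x) \<partial>lborel) = ennreal (M2_dens \<xi>)"
    unfolding M2_dens_def using xM2 nonneg by (intro nn_integral_eq_integral) auto
  finally show ?thesis using M2d_nonneg by (simp add: ennreal_mult)
qed

lemma phi_lin: "\<phi> z \<le> \<phi> 0 + (\<epsilon> powr (- real DIM('a)) * L / \<epsilon>) * norm z"
proof -
  have "\<xi> (z /\<^sub>R \<epsilon>) \<le> \<xi> 0 + L * norm (z /\<^sub>R \<epsilon>)"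
    using lipschitz_onD[OF lip, of "z /\<^sub>R \<epsilon>" 0] by (simp add: dist_norm abs_le_iff)
  also have "norm (z /\<^sub>R \<epsilon>) = norm z / \<epsilon>" using eps by (simp add: field_simps)
  finally have "\<epsilon> powr (- real DIM('a)) * \<xi> (z /\<^sub>R \<epsilon>) \<le> \<epsilon> powr (- real DIM('a)) * (\<xi> 0 + L * (norm z / \<epsilon>))"
    by (intro mult_left_mono) auto
  then show ?thesis unfolding mollifier_def by (simp add: algebra_simps)
qed

lemma L_nonneg: "L \<ge> 0" using lip lipschitz_on_nonneg by blast

definition "Bc = \<epsilon> powr (- real DIM('a)) * L / \<epsilon>"
lemma Bc_nonneg: "Bc \<ge> 0" unfolding Bc_def using eps L_nonneg by simp

lemma phi_M1: "(\<integral>\<^sup>+w. ennreal (\<phi> w * norm w) \<partial>lborel) \<le> ennreal (1 + \<epsilon>\<^sup>2 * M2_dens \<xi>)"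
proof -
  have "(\<integral>\<^sup>+w. ennreal (\<phi> w * norm w) \<partial>lborel) \<le> (\<integral>\<^sup>+w. ennreal (\<phi> w) + ennreal (\<phi> w * (norm w)\<^sup>2) \<partial>lborel)"
  proof (intro nn_integral_mono)
    fix w :: 'a
    have "2 * norm w \<le> 1 + (norm w)\<^sup>2"
      using zero_le_power2[of "norm w - 1"] by (simp add: power2_eq_square algebra_simps)
    then have "norm w \<le> 1 + (norm w)\<^sup>2" using norm_ge_zero[of w] by linarith
    then have "\<phi> w * norm w \<le> \<phi> w + \<phi> w * (norm w)\<^sup>2"
      using phi_nonneg[of w] by (metis distrib_left mult.right_neutral mult_left_mono)
    then show "ennreal (\<phi> w * norm w) \<le> ennreal (\<phi> w) + ennreal (\<phi> w * (norm w)\<^sup>2)"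
      by (simp add: ennreal_plus[symmetric] del: ennreal_plus)
  qed
  also have "\<dots> = 1 + ennreal (\<epsilon>\<^sup>2 * M2_dens \<xi>)"
    by (subst nn_integral_add) (auto simp: phi_int phi_M2)
  also have "\<dots> = ennreal (1 + \<epsilon>\<^sup>2 * M2_dens \<xi>)" using M2d_nonneg by (subst ennreal_plus) auto
  finally show ?thesis .
qed


definition "CK = \<phi> 0 + Bc * (1 + \<epsilon>\<^sup>2 * M2_dens \<xi>)"

lemma CK_nonneg: "CK \<ge> 0" unfolding CK_def using Bc_nonneg M2d_nonneg by simp

lemma phi_lin': "\<phi> (z - w) \<le> \<phi> 0 + Bc * norm z + Bc * norm w"
proof -
  have "\<phi> (z - w) \<le> \<phi> 0 + Bc * norm (z - w)" using phi_lin[of "z - w"] by (simp add: Bc_def)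
  also have "Bc * norm (z - w) \<le> Bc * (norm z + norm w)"
    using Bc_nonneg norm_triangle_ineq4[of z w] by (intro mult_left_mono) auto
  finally show ?thesis by (simp add: algebra_simps)
qed

lemma K_bound: "(\<integral>\<^sup>+w. ennreal (\<phi> (z - w) * \<phi> w) \<partial>lborel) \<le> ennreal (CK + Bc * norm z)"
proof -
  have "(\<integral>\<^sup>+w. ennreal (\<phi> (z - w) * \<phi> w) \<partial>lborel)
      \<le> (\<integral>\<^sup>+w. ennreal (\<phi> 0 + Bc * norm z) * ennreal (\<phi> w) + ennreal Bc * ennreal (\<phi> w * norm w) \<partial>lborel)"
  proof (intro nn_integral_mono)
    fix w :: 'a
    have "\<phi> (z - w) * \<phi> w \<le> (\<phi> 0 + Bc * norm z + Bc * norm w) * \<phi> w"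
      using phi_lin'[of z w] by (intro mult_right_mono) auto
    also have "\<dots> = (\<phi> 0 + Bc * norm z) * \<phi> w + Bc * (\<phi> w * norm w)" by (simp add: algebra_simps)
    finally have "ennreal (\<phi> (z - w) * \<phi> w) \<le> ennreal ((\<phi> 0 + Bc * norm z) * \<phi> w + Bc * (\<phi> w * norm w))"
      by (rule ennreal_leI)
    also have "\<dots> = ennreal (\<phi> 0 + Bc * norm z) * ennreal (\<phi> w) + ennreal Bc * ennreal (\<phi> w * norm w)"
      using Bc_nonneg phi_nonneg[of 0] phi_nonneg[of w]
      by (simp add: ennreal_plus ennreal_mult)
    finally show "ennreal (\<phi> (z - w) * \<phi> w) \<le> ennreal (\<phi> 0 + Bc * norm z) * ennreal (\<phi> w) + ennreal Bc * ennreal (\<phi> w * norm w)" .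
  qed
  also have "\<dots> = ennreal (\<phi> 0 + Bc * norm z) * 1 + ennreal Bc * (\<integral>\<^sup>+w. ennreal (\<phi> w * norm w) \<partial>lborel)"
    by (subst nn_integral_add) (auto simp: nn_integral_cmult phi_int)
  also have "\<dots> \<le> ennreal (\<phi> 0 + Bc * norm z) * 1 + ennreal Bc * ennreal (1 + \<epsilon>\<^sup>2 * M2_dens \<xi>)"
    by (intro add_mono mult_left_mono phi_M1) auto
  also have "\<dots> = ennreal (CK + Bc * norm z)"
    using Bc_nonneg phi_nonneg[of 0] M2d_nonneg unfolding CK_def
    by (simp add: ennreal_plus[symmetric] ennreal_mult[symmetric] algebra_simps del: ennreal_plus)
  finally show ?thesis .
qed

lemma kernelK_eq: "ennreal (kernelK \<epsilon> \<xi> z) = (\<integral>\<^sup>+w. ennreal (\<phi> (z - w) * \<phi> w) \<partial>lborel)"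
  and kernelK_nonneg: "kernelK \<epsilon> \<xi> z \<ge> 0"
proof -
  have int: "integrable lborel (\<lambda>w. \<phi> (z - w) * \<phi> w)"
    using K_bound[of z] by (intro integrableI_nonneg) (auto simp: top_unique[symmetric] order_le_less_trans[OF _ ennreal_less_top])
  show "ennreal (kernelK \<epsilon> \<xi> z) = (\<integral>\<^sup>+w. ennreal (\<phi> (z - w) * \<phi> w) \<partial>lborel)"
    unfolding kernelK_def using int by (subst nn_integral_eq_integral) auto
  show "kernelK \<epsilon> \<xi> z \<ge> 0" unfolding kernelK_def by (intro integral_nonneg_AE) auto
qed

lemma kernelK_le: "kernelK \<epsilon> \<xi> z \<le> CK + Bc * norm z"
  using K_bound[of z] kernelK_eq[of z] CK_nonneg Bc_nonneg
  by (metis ennreal_le_iff add_nonneg_nonneg mult_nonneg_nonneg norm_ge_zero)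

lemma kernelK_meas[measurable]: "kernelK \<epsilon> \<xi> \<in> borel_measurable borel"
proof -
  have "kernelK \<epsilon> \<xi> = (\<lambda>z. enn2real (\<integral>\<^sup>+w. ennreal (\<phi> (z - w) * \<phi> w) \<partial>lborel))"
    using kernelK_eq kernelK_nonneg by (auto simp: fun_eq_iff) (metis enn2real_ennreal)
  also have "\<dots> \<in> borel_measurable borel" by measurable
  finally show ?thesis .
qed

end

locale mm = moll \<epsilon> \<xi> L + prob_space M
  for \<epsilon> :: real and \<xi> :: "'a::euclidean_space \<Rightarrow> real" and L :: real and M :: "'a measure" +
  assumes msets: "sets M = sets borel"
    and mM2: "integrable M (\<lambda>x. (norm x)\<^sup>2)"
begin

interpretation pm: pair_sigma_finite M lborel
  by (simp add: pair_sigma_finite_def sigma_finite_measure_axioms sigma_finite_lborel)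

lemma measM: "f \<in> borel_measurable borel \<Longrightarrow> f \<in> borel_measurable M"
  using measurable_cong_sets[OF msets refl] by blast

lemma measML: "f \<in> borel_measurable (borel \<Otimes>\<^sub>M borel) \<Longrightarrow> f \<in> borel_measurable (M \<Otimes>\<^sub>M (lborel :: 'a measure))"
proof -
  have S: "sets (M \<Otimes>\<^sub>M lborel) = sets (borel \<Otimes>\<^sub>M (borel :: 'a measure))"
    by (rule sets_pair_measure_cong) (simp_all add: msets)
  show "f \<in> borel_measurable (borel \<Otimes>\<^sub>M borel) \<Longrightarrow> f \<in> borel_measurable (M \<Otimes>\<^sub>M (lborel :: 'a measure))"
    using measurable_cong_sets[OF S refl] by metis
qed

lemma measBM: "f \<in> borel_measurable (borel \<Otimes>\<^sub>M borel) \<Longrightarrow> f \<in> borel_measurable (borel \<Otimes>\<^sub>M M)"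
proof -
  have S: "sets (borel \<Otimes>\<^sub>M M) = sets (borel \<Otimes>\<^sub>M (borel :: 'a measure))"
    by (rule sets_pair_measure_cong) (simp_all add: msets)
  show "f \<in> borel_measurable (borel \<Otimes>\<^sub>M borel) \<Longrightarrow> f \<in> borel_measurable (borel \<Otimes>\<^sub>M M)"
    using measurable_cong_sets[OF S refl] by metis
qed

definition "\<nu> u = (\<integral>\<^sup>+y. ennreal (\<phi> (u - y)) \<partial>M)"
definition "R x = (\<integral>\<^sup>+u. ennreal (\<phi> (x - u)) * \<nu> u \<partial>lborel)"

lemma nu_meas[measurable]: "\<nu> \<in> borel_measurable borel"
proof -
  have "(\<lambda>(u, y). ennreal (\<phi> (u - y))) \<in> borel_measurable (borel \<Otimes>\<^sub>M M)"
    by (rule measBM) measurable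
  then show ?thesis unfolding \<nu>_def[abs_def] by (rule borel_measurable_nn_integral) 
qed

lemma R_meas[measurable]: "R \<in> borel_measurable borel"
  unfolding R_def[abs_def] by measurable

lemma first_moment: "(\<integral>\<^sup>+y. ennreal (norm y) \<partial>M) \<le> ennreal (1 + M2 M)"
proof -
  have "(\<integral>\<^sup>+y. ennreal (norm y) \<partial>M) \<le> (\<integral>\<^sup>+y. 1 + ennreal ((norm y)\<^sup>2) \<partial>M)"
  proof (intro nn_integral_mono)
    fix w :: 'a
    have "2 * norm w \<le> 1 + (norm w)\<^sup>2"
      using zero_le_power2[of "norm w - 1"] by (simp add: power2_eq_square algebra_simps)
    then have "norm w \<le> 1 + (norm w)\<^sup>2" using norm_ge_zero[of w] by linarith
    then show "ennreal (norm w) \<le> 1 + ennreal ((norm w)\<^sup>2)"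
      by (metis ennreal_1 ennreal_leI ennreal_plus zero_le_one zero_le_power2)
  qed
  also have "\<dots> = 1 + ennreal (M2 M)"
    using mM2 unfolding M2_def
    by (subst nn_integral_add) (auto intro!: measM simp: nn_integral_eq_integral emeasure_space_1)
  also have "\<dots> = ennreal (1 + M2 M)"
    unfolding M2_def by (subst ennreal_plus) (auto intro!: integral_nonneg_AE)
  finally show ?thesis .
qed

lemma convK_eq: "ennreal (convK \<epsilon> \<xi> M x) = R x" and convK_nonneg: "convK \<epsilon> \<xi> M x \<ge> 0"
proof -
  have mK[measurable]: "(\<lambda>y. kernelK \<epsilon> \<xi> (x - y)) \<in> borel_measurable M"
    by (rule measM) measurable
  have "(\<integral>\<^sup>+y. ennreal (kernelK \<epsilon> \<xi> (x - y)) \<partial>M) \<le> (\<integral>\<^sup>+y. ennreal (CK + Bc * norm x) + ennreal Bc * ennreal (norm y) \<partial>M)"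
  proof (intro nn_integral_mono)
    fix y :: 'a
    have "kernelK \<epsilon> \<xi> (x - y) \<le> CK + Bc * norm x + Bc * norm y"
    proof -
      have "Bc * norm (x - y) \<le> Bc * (norm x + norm y)"
        using Bc_nonneg norm_triangle_ineq4[of x y] by (rule mult_left_mono[rotated])
      then show ?thesis using kernelK_le[of "x - y"] by (simp add: algebra_simps)
    qed
    then show "ennreal (kernelK \<epsilon> \<xi> (x - y)) \<le> ennreal (CK + Bc * norm x) + ennreal Bc * ennreal (norm y)"
      using CK_nonneg Bc_nonneg
      by (metis add_nonneg_nonneg ennreal_leI ennreal_mult ennreal_plus mult_nonneg_nonneg norm_ge_zero)
  qed
  also have "\<dots> = ennreal (CK + Bc * norm x) + ennreal Bc * (\<integral>\<^sup>+y. ennreal (norm y) \<partial>M)"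
    by (subst nn_integral_add) (auto intro!: measM simp: nn_integral_cmult[OF measM] emeasure_space_1)
  also have "\<dots> < \<infinity>"
    using first_moment by (simp add: ennreal_mult_less_top order_le_less_trans[OF _ ennreal_less_top])
  finally have int: "integrable M (\<lambda>y. kernelK \<epsilon> \<xi> (x - y))"
    by (intro integrableI_nonneg) (auto simp: kernelK_nonneg)
  show "convK \<epsilon> \<xi> M x \<ge> 0" unfolding convK_def by (intro integral_nonneg_AE) (auto simp: kernelK_nonneg)
  have "ennreal (convK \<epsilon> \<xi> M x) = (\<integral>\<^sup>+y. ennreal (kernelK \<epsilon> \<xi> (x - y)) \<partial>M)"
    unfolding convK_def using int by (subst nn_integral_eq_integral) (auto simp: kernelK_nonneg)
  also have "\<dots> = (\<integral>\<^sup>+y. (\<integral>\<^sup>+w. ennreal (\<phi> (x - y - w) * \<phi> w) \<partial>lborel) \<partial>M)"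
    by (simp add: kernelK_eq)
  also have "\<dots> = (\<integral>\<^sup>+y. (\<integral>\<^sup>+u. ennreal (\<phi> (x - u) * \<phi> (u - y)) \<partial>lborel) \<partial>M)"
  proof (rule nn_integral_cong)
    fix y :: 'a
    assume "y \<in> space M"
    have "(\<lambda>w. ennreal (\<phi> (x - y - w) * \<phi> w)) \<in> borel_measurable borel" by measurable
    from nn_integral_shift[OF this, of "- y"]
    show "(\<integral>\<^sup>+w. ennreal (\<phi> (x - y - w) * \<phi> w) \<partial>lborel) = (\<integral>\<^sup>+u. ennreal (\<phi> (x - u) * \<phi> (u - y)) \<partial>lborel)"
      by (simp add: algebra_simps)
  qed
  also have "\<dots> = (\<integral>\<^sup>+u. (\<integral>\<^sup>+y. ennreal (\<phi> (x - u) * \<phi> (u - y)) \<partial>M) \<partial>lborel)"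
  proof (rule pm.Fubini'[symmetric])
    show "(\<lambda>(y, u). ennreal (\<phi> (x - u) * \<phi> (u - y))) \<in> borel_measurable (M \<Otimes>\<^sub>M lborel)"
      by (rule measML) measurable
  qed
  also have "\<dots> = R x"
    unfolding R_def \<nu>_def
    by (intro nn_integral_cong) (simp add: ennreal_mult nn_integral_cmult measM)
  finally show "ennreal (convK \<epsilon> \<xi> M x) = R x" .
qed

lemma R_fin: "R x < \<infinity>"
proof -
  have "R x = ennreal (convK \<epsilon> \<xi> M x)" using convK_eq[of x] by simp
  then show ?thesis by simp
qed

end

definition gs :: "real \<Rightarrow> 'a::euclidean_space \<Rightarrow> real" where
  "gs \<delta> y = (\<Prod>b\<in>Basis. normal_density 0 (sqrt (1 / (2 * \<delta>))) (y \<bullet> b))"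

lemma gs_meas[measurable]: "gs \<delta> \<in> borel_measurable borel"
  unfolding gs_def[abs_def] by measurable

lemma gs_pos: "\<delta> > 0 \<Longrightarrow> gs \<delta> y > 0"
  unfolding gs_def by (intro prod_pos normal_density_pos) auto

lemma gs_int:
  assumes "\<delta> > 0"
  shows "(\<integral>\<^sup>+y. ennreal (gs \<delta> y :: real) \<partial>(lborel :: 'a::euclidean_space measure)) = 1"
proof -
  let ?s = "sqrt (1 / (2 * \<delta>))"
  have s: "?s > 0" using assms by simp
  have "(\<integral>\<^sup>+y. ennreal (gs \<delta> y) \<partial>(lborel :: 'a measure))
      = (\<integral>\<^sup>+y. (\<Prod>b\<in>(Basis :: 'a set). ennreal (normal_density 0 ?s (y \<bullet> b))) \<partial>lborel)"
    unfolding gs_def by (subst prod_ennreal) auto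
  also have "\<dots> = (\<Prod>b\<in>(Basis :: 'a set). (\<integral>\<^sup>+t. ennreal (normal_density 0 ?s t) \<partial>lborel))"
    by (subst nn_integral_lborel_prod) auto
  also have "\<dots> = (\<Prod>b\<in>(Basis :: 'a set). 1)"
    using s by (intro prod.cong refl) (simp add: nn_integral_eq_integral)
  finally show ?thesis by simp
qed

lemma key_real:
  fixes a r n g :: real
  assumes "a \<ge> 0" "r > 0" "n > 0" "g > 0"
  shows "a * (2 + ln g - ln r) \<le> a * (n / r) + a * (g / n)"
proof -
  have "ln (n / r) \<le> n / r - 1" using assms by (intro ln_le_minus_one) auto
  moreover have "ln (g / n) \<le> g / n - 1" using assms by (intro ln_le_minus_one) auto
  moreover have "ln (n / r) + ln (g / n) = ln g - ln r" using assms by (simp add: ln_div)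
  ultimately have "2 + ln g - ln r \<le> n / r + g / n" by linarith
  then show ?thesis using assms(1) by (metis distrib_left mult_left_mono)
qed




lemma gs_ln:
  assumes "\<delta> > 0"
  shows "ln (gs \<delta> (y :: 'a::euclidean_space)) = - \<delta> * (norm y)\<^sup>2 - real DIM('a) * ln (sqrt (pi / \<delta>))"
proof -
  define s where "s = sqrt (1 / (2 * \<delta>))"
  have s2: "s\<^sup>2 = 1 / (2 * \<delta>)" unfolding s_def using assms by simp
  have q: "sqrt (pi / \<delta>) > 0" using assms by simp
  have nd: "ln (normal_density 0 s t) = - ln (sqrt (pi / \<delta>)) - \<delta> * t\<^sup>2" for t
  proof -
    have e1: "2 * pi * s\<^sup>2 = pi / \<delta>" unfolding s2 using assms by simp
    have e2: "-(t - 0)\<^sup>2 / (2 * s\<^sup>2) = - \<delta> * t\<^sup>2" unfolding s2 using assms by simp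
    have "normal_density 0 s t = inverse (sqrt (pi / \<delta>)) * exp (- \<delta> * t\<^sup>2)"
      unfolding normal_density_def e1 e2 by (simp add: divide_inverse)
    then show ?thesis using q by (simp add: ln_mult ln_inverse)
  qed
  have np: "normal_density 0 s t = 0 \<Longrightarrow> False" for t
    using normal_density_pos[of s 0 t] assms unfolding s_def by simp
  have "ln (gs \<delta> y) = (\<Sum>b\<in>Basis. ln (normal_density 0 s (y \<bullet> b)))"
    unfolding gs_def s_def[symmetric] by (subst ln_prod) (auto dest: np)
  also have "\<dots> = (\<Sum>b\<in>(Basis :: 'a set). - ln (sqrt (pi / \<delta>)) - \<delta> * (y \<bullet> b)\<^sup>2)"
    by (simp only: nd)
  also have "\<dots> = - real DIM('a) * ln (sqrt (pi / \<delta>)) - \<delta> * (\<Sum>b\<in>(Basis :: 'a set). (y \<bullet> b)\<^sup>2)"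
    by (simp only: sum_subtractf sum_distrib_left[symmetric] sum_constant)
  also have "(\<Sum>b\<in>(Basis :: 'a set). (y \<bullet> b)\<^sup>2) = (norm y)\<^sup>2"
    unfolding power2_norm_eq_inner euclidean_inner[of y y] by (simp add: power2_eq_square)
  finally show ?thesis by simp
qed

lemma key_enn:
  fixes a r g c :: real and n :: ennreal
  assumes "a \<ge> 0" "r > 0" "g > 0" "c \<ge> 0" "ln g = - c - k"
  shows "ennreal (a * (2 - k - ln r)) \<le> ennreal (a * c) + ennreal a * n / ennreal r + ennreal a * (ennreal g / n)"
proof (cases "a = 0")
  case False
  then have apos: "a > 0" using assms by simp
  show ?thesis
  proof (cases "n = 0")
    case True
    then have "ennreal a * (ennreal g / n) = \<infinity>" using apos assms by (simp add: ennreal_mult_eq_top_iff)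
    then show ?thesis by simp
  next
    case False
    show ?thesis
    proof (cases "n = \<infinity>")
      case True
      then have "ennreal a * n / ennreal r = \<infinity>" using apos assms
        by (simp add: ennreal_mult_eq_top_iff ennreal_divide_eq_top_iff)
      then show ?thesis by simp
    next
      case nf: False
      then obtain n' where n': "n = ennreal n'" "n' \<ge> 0" using ennreal_cases[of n] by auto
      with False have n'pos: "n' > 0" by auto
      have "a * (2 - k - ln r) = a * (2 + ln g - ln r) + a * c" unfolding assms(5) by (simp add: algebra_simps)
      also have "\<dots> \<le> a * (n' / r) + a * (g / n') + a * c"
        using key_real[OF assms(1,2) n'pos assms(3)] by simp
      finally have le: "ennreal (a * (2 - k - ln r)) \<le> ennreal (a * c + a * (n' / r) + a * (g / n'))"
        by (intro ennreal_leI) simp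
      also have "\<dots> = ennreal (a * c) + ennreal (a * (n' / r)) + ennreal (a * (g / n'))"
        using assms n' n'pos by (subst ennreal_plus; simp)+
      also have "ennreal (a * (n' / r)) = ennreal a * n / ennreal r"
        using assms n' n'pos by (simp add: ennreal_mult[symmetric] divide_ennreal)
      also have "ennreal (a * (g / n')) = ennreal a * (ennreal g / n)"
        using assms n' n'pos by (simp add: ennreal_mult[symmetric] divide_ennreal)
      finally show ?thesis .
    qed
  qed
qed simp


locale mmd = mm \<epsilon> \<xi> L M
  for \<epsilon> :: real and \<xi> :: "'a::euclidean_space \<Rightarrow> real" and L :: real and M :: "'a measure" +
  fixes \<delta> :: real
  assumes dpos: "\<delta> > 0"
begin

interpretation pm: pair_sigma_finite M lborel
  by (simp add: pair_sigma_finite_def sigma_finite_measure_axioms sigma_finite_lborel)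

definition "G x = (\<integral>\<^sup>+y. ennreal (\<phi> (x - y)) * (ennreal (gs \<delta> y) / \<nu> y) \<partial>lborel)"
definition "c0 = real DIM('a) * ln (sqrt (pi / \<delta>))"

lemma G_joint: "(\<lambda>(x, y). ennreal (\<phi> (x - y)) * (ennreal (gs \<delta> y) / \<nu> y)) \<in> borel_measurable (borel \<Otimes>\<^sub>M borel)"
  by measurable

lemma G_meas[measurable]: "G \<in> borel_measurable borel"
  unfolding G_def[abs_def] by measurable

lemma G_int: "(\<integral>\<^sup>+x. G x \<partial>M) \<le> 1"
proof -
  have "(\<integral>\<^sup>+x. G x \<partial>M) = (\<integral>\<^sup>+y. (\<integral>\<^sup>+x. ennreal (\<phi> (x - y)) * (ennreal (gs \<delta> y) / \<nu> y) \<partial>M) \<partial>lborel)"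
    unfolding G_def by (rule pm.Fubini'[symmetric]) (rule measML[OF G_joint])
  also have "\<dots> = (\<integral>\<^sup>+y. \<nu> y * (ennreal (gs \<delta> y) / \<nu> y) \<partial>lborel)"
  proof (rule nn_integral_cong)
    fix y :: 'a
    have "(\<integral>\<^sup>+x. ennreal (\<phi> (x - y)) * (ennreal (gs \<delta> y) / \<nu> y) \<partial>M)
        = (\<integral>\<^sup>+x. ennreal (\<phi> (x - y)) \<partial>M) * (ennreal (gs \<delta> y) / \<nu> y)"
      by (rule nn_integral_multc) (rule measM, measurable)
    also have "(\<integral>\<^sup>+x. ennreal (\<phi> (x - y)) \<partial>M) = \<nu> y"
      unfolding \<nu>_def by (simp add: phi_sym2[of _ y])
    finally show "(\<integral>\<^sup>+x. ennreal (\<phi> (x - y)) * (ennreal (gs \<delta> y) / \<nu> y) \<partial>M) = \<nu> y * (ennreal (gs \<delta> y) / \<nu> y)" .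
  qed
  also have "\<dots> \<le> (\<integral>\<^sup>+y. ennreal (gs \<delta> (y :: 'a)) \<partial>lborel)"
    by (rule nn_integral_mono) (rule ennreal_mult_div_le)
  also have "\<dots> = 1" using gs_int dpos by blast
  finally show ?thesis .
qed

lemma phi_refl_int: "(\<integral>\<^sup>+y. ennreal (\<phi> (x - y)) \<partial>lborel) = 1"
  using nn_integral_reflect[of "\<lambda>z. ennreal (\<phi> z)" x] phi_int by simp

lemma G_top: assumes "convK \<epsilon> \<xi> M x = 0" shows "G x = \<infinity>"
proof -
  have "R x = 0" using convK_eq[of x] assms by simp
  then have "AE u in lborel. ennreal (\<phi> (x - u)) * \<nu> u = 0"
    unfolding R_def by (subst (asm) nn_integral_0_iff_AE) auto
  then have "AE y in lborel. ennreal (\<phi> (x - y)) * (ennreal (gs \<delta> y) / \<nu> y) = ennreal (\<phi> (x - y)) * \<infinity>"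
  proof (rule AE_mp, intro AE_I2 impI)
    fix y :: 'a
    assume h: "ennreal (\<phi> (x - y)) * \<nu> y = 0"
    show "ennreal (\<phi> (x - y)) * (ennreal (gs \<delta> y) / \<nu> y) = ennreal (\<phi> (x - y)) * \<infinity>"
    proof (cases "\<phi> (x - y) = 0")
      case False
      then have "\<nu> y = 0" using h phi_nonneg[of "x - y"] by simp
      then show ?thesis using gs_pos[OF dpos, of y] by simp
    qed simp
  qed
  then have "G x = (\<integral>\<^sup>+y. ennreal (\<phi> (x - y)) * \<infinity> \<partial>lborel)"
    unfolding G_def by (rule nn_integral_cong_AE)
  also have "\<dots> = (\<integral>\<^sup>+y. ennreal (\<phi> (x - y)) \<partial>lborel) * \<infinity>"
    by (rule nn_integral_multc) measurable
  also have "\<dots> = \<infinity>" by (simp add: phi_refl_int)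
  finally show ?thesis .
qed

lemma Mom: "(\<integral>\<^sup>+y. ennreal (\<phi> (x - y) * (\<delta> * (norm y)\<^sup>2)) \<partial>lborel) \<le> ennreal (\<delta> * (2 * (norm x)\<^sup>2 + 2 * (\<epsilon>\<^sup>2 * M2_dens \<xi>)))"
proof -
  have "(\<integral>\<^sup>+y. ennreal (\<phi> (x - y) * (\<delta> * (norm y)\<^sup>2)) \<partial>lborel)
     \<le> (\<integral>\<^sup>+y. ennreal (\<delta> * 2 * (norm x)\<^sup>2) * ennreal (\<phi> (x - y)) + ennreal (2 * \<delta>) * ennreal (\<phi> (x - y) * (norm (x - y))\<^sup>2) \<partial>lborel)"
  proof (intro nn_integral_mono)
    fix y :: 'a
    have "norm y \<le> norm x + norm (x - y)" using norm_triangle_ineq4[of x "x - y"] by simp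
    then have "(norm y)\<^sup>2 \<le> (norm x + norm (x - y))\<^sup>2" by (intro power_mono) auto
    also have "\<dots> \<le> 2 * (norm x)\<^sup>2 + 2 * (norm (x - y))\<^sup>2"
      using zero_le_power2[of "norm x - norm (x - y)"] by (simp add: power2_eq_square algebra_simps)
    finally have "\<phi> (x - y) * (\<delta> * (norm y)\<^sup>2) \<le> \<phi> (x - y) * (\<delta> * (2 * (norm x)\<^sup>2 + 2 * (norm (x - y))\<^sup>2))"
      using dpos by (intro mult_left_mono) auto
    also have "\<dots> = (\<delta> * 2 * (norm x)\<^sup>2) * \<phi> (x - y) + (2 * \<delta>) * (\<phi> (x - y) * (norm (x - y))\<^sup>2)"
      by (simp add: algebra_simps)
    finally show "ennreal (\<phi> (x - y) * (\<delta> * (norm y)\<^sup>2)) \<le> ennreal (\<delta> * 2 * (norm x)\<^sup>2) * ennreal (\<phi> (x - y)) + ennreal (2 * \<delta>) * ennreal (\<phi> (x - y) * (norm (x - y))\<^sup>2)"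
      using dpos by (subst ennreal_mult[symmetric], simp, simp)+ (subst ennreal_plus[symmetric], simp, simp, rule ennreal_leI)
  qed
  also have "\<dots> = ennreal (\<delta> * 2 * (norm x)\<^sup>2) * 1 + ennreal (2 * \<delta>) * ennreal (\<epsilon>\<^sup>2 * M2_dens \<xi>)"
  proof -
    have "(\<integral>\<^sup>+y. ennreal (\<phi> (x - y) * (norm (x - y))\<^sup>2) \<partial>lborel) = (\<integral>\<^sup>+y. ennreal (\<phi> y * (norm y)\<^sup>2) \<partial>lborel)"
      by (rule nn_integral_reflect[where f="\<lambda>z. ennreal (\<phi> z * (norm z)\<^sup>2)"]) measurable
    then show ?thesis
      by (subst nn_integral_add) (auto simp: nn_integral_cmult phi_refl_int phi_M2)
  qed
  also have "\<dots> = ennreal (\<delta> * (2 * (norm x)\<^sup>2 + 2 * (\<epsilon>\<^sup>2 * M2_dens \<xi>)))"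
    using dpos M2d_nonneg by (simp add: ennreal_mult[symmetric] ennreal_plus[symmetric] algebra_simps del: ennreal_plus)
  finally show ?thesis .
qed


lemma maxlem: "- (F::real) \<le> Q + g \<Longrightarrow> 0 \<le> g \<Longrightarrow> max 0 (- F) + max 0 (- Q) \<le> max 0 F + max 0 Q + g"
  by (auto simp: max_def)

lemma C3:
  assumes rpos: "convK \<epsilon> \<xi> M x > 0"
  shows "ennreal (2 - c0 - ln (convK \<epsilon> \<xi> M x)) \<le> ennreal (\<delta> * (2 * (norm x)\<^sup>2 + 2 * (\<epsilon>\<^sup>2 * M2_dens \<xi>))) + 1 + G x"
proof (cases "2 - c0 - ln (convK \<epsilon> \<xi> M x) \<le> 0")
  case True
  then show ?thesis by (simp add: ennreal_neg)
next
  case False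
  define r where "r = convK \<epsilon> \<xi> M x"
  define C where "C = 2 - c0 - ln r"
  have r: "r > 0" using rpos r_def by simp
  have C: "C \<ge> 0" using False unfolding C_def r_def by simp
  have Rr: "R x = ennreal r" unfolding r_def using convK_eq[of x] by simp
  have "ennreal C = (\<integral>\<^sup>+y. ennreal (\<phi> (x - y)) \<partial>lborel) * ennreal C" by (simp add: phi_refl_int)
  also have "\<dots> = (\<integral>\<^sup>+y. ennreal (\<phi> (x - y)) * ennreal C \<partial>lborel)"
    by (rule nn_integral_multc[symmetric]) measurable
  also have "\<dots> \<le> (\<integral>\<^sup>+y. ennreal (\<phi> (x - y) * (\<delta> * (norm y)\<^sup>2)) + ennreal (\<phi> (x - y)) * \<nu> y / ennreal r
        + ennreal (\<phi> (x - y)) * (ennreal (gs \<delta> y) / \<nu> y) \<partial>lborel)"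
  proof (rule nn_integral_mono)
    fix y :: 'a
    have "ennreal (\<phi> (x - y)) * ennreal C = ennreal (\<phi> (x - y) * (2 - c0 - ln r))"
      using C unfolding C_def by (simp add: ennreal_mult)
    also have "\<dots> \<le> ennreal (\<phi> (x - y) * (\<delta> * (norm y)\<^sup>2)) + ennreal (\<phi> (x - y)) * \<nu> y / ennreal r
        + ennreal (\<phi> (x - y)) * (ennreal (gs \<delta> y) / \<nu> y)"
    proof (rule key_enn)
      show "0 \<le> \<phi> (x - y)" by simp
      show "0 < r" by (rule r)
      show "0 < gs \<delta> y" using gs_pos[OF dpos] .
      show "0 \<le> \<delta> * (norm y)\<^sup>2" using dpos by simp
      show "ln (gs \<delta> y) = - (\<delta> * (norm y)\<^sup>2) - c0" unfolding c0_def using gs_ln[OF dpos, of y] by simp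
    qed
    finally show "ennreal (\<phi> (x - y)) * ennreal C \<le> ennreal (\<phi> (x - y) * (\<delta> * (norm y)\<^sup>2)) + ennreal (\<phi> (x - y)) * \<nu> y / ennreal r
        + ennreal (\<phi> (x - y)) * (ennreal (gs \<delta> y) / \<nu> y)" .
  qed
  also have "\<dots> = (\<integral>\<^sup>+y. ennreal (\<phi> (x - y) * (\<delta> * (norm y)\<^sup>2)) \<partial>lborel)
       + (\<integral>\<^sup>+y. ennreal (\<phi> (x - y)) * \<nu> y / ennreal r \<partial>lborel) + G x"
    unfolding G_def by (subst nn_integral_add, measurable)+
  also have "(\<integral>\<^sup>+y. ennreal (\<phi> (x - y)) * \<nu> y / ennreal r \<partial>lborel) = R x / ennreal r"
    unfolding R_def by (rule nn_integral_divide) measurable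
  also have "R x / ennreal r = 1" using r Rr by (simp add: divide_ennreal)
  also have "(\<integral>\<^sup>+y. ennreal (\<phi> (x - y) * (\<delta> * (norm y)\<^sup>2)) \<partial>lborel) + 1 + G x
      \<le> ennreal (\<delta> * (2 * (norm x)\<^sup>2 + 2 * (\<epsilon>\<^sup>2 * M2_dens \<xi>))) + 1 + G x"
    by (intro add_right_mono Mom)
  finally show ?thesis unfolding C_def r_def .
qed

lemma fbound:
  fixes U :: "'a \<Rightarrow> real" and C0 C1 :: real
  assumes U_lb: "\<And>x. U x \<ge> C0 + C1 * (norm x)\<^sup>2"
  shows "ennreal (- ln (convK \<epsilon> \<xi> M x / exp (- U x))) + ennreal (- (- C0 - C1 * (norm x)\<^sup>2 + 2 * \<delta> * (norm x)\<^sup>2 + 2 * \<delta> * (\<epsilon>\<^sup>2 * M2_dens \<xi>) - 1 + c0))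
     \<le> ennreal (ln (convK \<epsilon> \<xi> M x / exp (- U x))) + ennreal (- C0 - C1 * (norm x)\<^sup>2 + 2 * \<delta> * (norm x)\<^sup>2 + 2 * \<delta> * (\<epsilon>\<^sup>2 * M2_dens \<xi>) - 1 + c0) + G x"
    (is "ennreal (- ?f) + ennreal (- ?q) \<le> ennreal ?f + ennreal ?q + G x")
proof (cases "G x = \<infinity>")
  case False
  then obtain gx where gx: "G x = ennreal gx" "gx \<ge> 0" using ennreal_cases[of "G x"] by auto
  define r where "r = convK \<epsilon> \<xi> M x"
  have "r \<noteq> 0" using G_top[of x] False r_def by auto
  then have r: "r > 0" using convK_nonneg[of x] r_def by simp
  have "ennreal (2 - c0 - ln r) \<le> ennreal (\<delta> * (2 * (norm x)\<^sup>2 + 2 * (\<epsilon>\<^sup>2 * M2_dens \<xi>))) + 1 + ennreal gx"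
    using C3[of x] r gx unfolding r_def by simp
  also have "\<dots> = ennreal (\<delta> * (2 * (norm x)\<^sup>2 + 2 * (\<epsilon>\<^sup>2 * M2_dens \<xi>)) + 1 + gx)"
    using dpos M2d_nonneg gx by (simp add: ennreal_plus)
  finally have h: "2 - c0 - ln r \<le> \<delta> * (2 * (norm x)\<^sup>2 + 2 * (\<epsilon>\<^sup>2 * M2_dens \<xi>)) + 1 + gx"
    using dpos M2d_nonneg gx by (subst (asm) ennreal_le_iff) auto
  have f: "?f = ln r + U x" unfolding r_def[symmetric] using r by (simp add: ln_div)
  have "- ?f \<le> ?q + gx" using h f U_lb[of x] by (simp add: algebra_simps)
  then have real: "max 0 (- ?f) + max 0 (- ?q) \<le> max 0 ?f + max 0 ?q + gx" using gx(2) by (rule maxlem)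
  have "ennreal (- ?f) + ennreal (- ?q) = ennreal (max 0 (- ?f)) + ennreal (max 0 (- ?q))"
    by (simp only: ennreal_max0)
  also have "\<dots> = ennreal (max 0 (- ?f) + max 0 (- ?q))"
    by (rule ennreal_plus[symmetric]) auto
  also have "\<dots> \<le> ennreal (max 0 ?f + max 0 ?q + gx)" by (rule ennreal_leI[OF real])
  also have "\<dots> = ennreal (max 0 ?f) + ennreal (max 0 ?q) + ennreal gx"
    using gx by (subst ennreal_plus; auto)+
  also have "\<dots> = ennreal ?f + ennreal ?q + G x"
    using gx by (simp only: ennreal_max0)
  finally show ?thesis .
qed simp

end


lemma ereal_final:
  fixes P N :: ennreal and a b :: real
  assumes "a \<ge> 0" "b \<ge> 0" "N + ennreal b \<le> P + ennreal a + 1"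
  shows "ereal (b - a - 1) \<le> enn2ereal P - enn2ereal N"
proof (cases "P = \<infinity>")
  case True
  then show ?thesis by simp
next
  case False
  then obtain p where p: "P = ennreal p" "p \<ge> 0" using ennreal_cases[of P] by auto
  have "N \<le> P + ennreal a + 1" using assms(3) by (metis add_increasing2 le_iff_add zero_le)
  then have "N \<noteq> \<infinity>" using p by (auto simp: top_unique)
  then obtain n where n: "N = ennreal n" "n \<ge> 0" using ennreal_cases[of N] by auto
  have e1: "N + ennreal b = ennreal (n + b)" using n assms by simp
  have e2: "P + ennreal a + 1 = ennreal (p + a + 1)" using p assms by simp
  have "ennreal (n + b) \<le> ennreal (p + a + 1)"
    using assms(3) unfolding e1 e2 .
  then have "n + b \<le> p + a + 1" using assms p by (subst (asm) ennreal_le_iff) auto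
  then show ?thesis using p n by simp
qed

lemma c0_bound:
  fixes \<delta> :: real and d :: nat
  assumes "\<delta> > 0"
  shows "real d * ln (sqrt (pi / \<delta>)) \<le> (2 * pi / \<delta>) powr (real d / 2)"
proof -
  define a where "a = real d / 2 * ln (pi / \<delta>)"
  have pd: "pi / \<delta> > 0" using assms by simp
  have "real d * ln (sqrt (pi / \<delta>)) = a" unfolding a_def using pd by (simp add: ln_sqrt)
  also have "a \<le> exp a" using exp_ge_add_one_self[of a] by linarith
  also have "exp a = (pi / \<delta>) powr (real d / 2)" unfolding a_def powr_def using pd assms by simp
  also have "\<dots> \<le> (2 * pi / \<delta>) powr (real d / 2)"
    using assms by (intro powr_mono2) (auto simp: divide_right_mono)
  finally show ?thesis .
qed

theorem mainTheorem11:
  fixes F :: "'a::euclidean_space measure \<Rightarrow> real"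
    and \<xi> U :: "'a \<Rightarrow> real"
    and \<sigma> \<epsilon> Fmin C0 C1 :: real
  assumes "\<sigma> > 0" and "\<epsilon> > 0"
    and F_lb: "\<And>m. P2 m \<Longrightarrow> F m \<ge> Fmin"
    and xi_smooth: "smooth_fun \<xi>"
    and xi_lip: "\<exists>L. L-lipschitz_on UNIV \<xi>"
    and xi_radial: "\<And>x y. norm x = norm y \<Longrightarrow> \<xi> x = \<xi> y"
    and xi_nonneg: "\<And>z. \<xi> z \<ge> 0"
    and xi_int: "integrable lborel \<xi>" and xi_one: "(\<integral>z. \<xi> z \<partial>lborel) = 1"
    and xi_supp: "closure {z. \<xi> z \<noteq> 0} = UNIV"
    and xi_M2: "integrable lborel (\<lambda>z. (norm z)\<^sup>2 * \<xi> z)"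
    and U_meas: "U \<in> borel_measurable borel"
    and pi_dens: "(\<integral>\<^sup>+x. ennreal (exp (- U x)) \<partial>lborel) = 1"
    and "C1 > 0"
    and U_lb: "\<And>x. U x \<ge> C0 + C1 * (norm x)\<^sup>2"
  shows "\<forall>m \<delta>. P2 m \<and> \<delta> > 0 \<longrightarrow>
     ereal (Fmin / \<sigma> + C0 + C1 * M2 m - (2 * pi / \<delta>) powr (real DIM('a) / 2)
             - 2 * \<delta> * (M2 m + \<epsilon>\<^sup>2 * M2_dens \<xi>))
     \<le> Vfun F \<sigma> \<epsilon> \<xi> (\<lambda>x. exp (- U x)) m / ereal \<sigma>"
proof (intro allI impI, elim conjE)
  fix m :: "'a measure" and \<delta> :: real
  assume Pm: "P2 m" and d: "\<delta> > 0"
  obtain L where lip: "L-lipschitz_on UNIV \<xi>" using xi_lip by blast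
  have mo: "moll \<epsilon> \<xi> L"
    unfolding moll_def using \<open>\<epsilon> > 0\<close> lip xi_nonneg xi_int xi_one xi_M2 xi_radial by blast
  have mmm: "mm \<epsilon> \<xi> L m"
    unfolding mm_def mm_axioms_def using mo Pm unfolding P2_def by blast
  interpret mmd \<epsilon> \<xi> L m \<delta>
    unfolding mmd_def mmd_axioms_def using mmm d by blast
  define f where "f x = ln (convK \<epsilon> \<xi> m x / exp (- U x))" for x
  define A where "A = - C0 + 2 * \<delta> * (\<epsilon>\<^sup>2 * M2_dens \<xi>) - 1 + c0"
  define B where "B = 2 * \<delta> - C1"
  define q where "q x = - C0 - C1 * (norm x)\<^sup>2 + 2 * \<delta> * (norm x)\<^sup>2 + 2 * \<delta> * (\<epsilon>\<^sup>2 * M2_dens \<xi>) - 1 + c0" for x :: 'a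
  have q_eq: "q = (\<lambda>x. A + B * (norm x)\<^sup>2)" unfolding q_def A_def B_def by (auto simp: fun_eq_iff algebra_simps)
  have fb: "ennreal (- f x) + ennreal (- q x) \<le> ennreal (f x) + ennreal (q x) + G x" for x
    unfolding f_def q_def by (rule fbound[OF U_lb])
  have cK: "(\<lambda>x. convK \<epsilon> \<xi> m x) = (\<lambda>x. enn2real (R x))"
    using convK_eq convK_nonneg by (auto simp: fun_eq_iff) (metis enn2real_ennreal)
  have fm[measurable]: "f \<in> borel_measurable m"
    unfolding f_def[abs_def] cK by (rule measM) (use U_meas in measurable)
  have qint: "integrable m q" unfolding q_eq using mM2 by auto
  have qm[measurable]: "q \<in> borel_measurable m" using qint by auto
  have Gm[measurable]: "G \<in> borel_measurable m" by (rule measM) measurable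
  have intq: "(\<integral>x. q x \<partial>m) = A + B * M2 m"
    unfolding q_eq M2_def using mM2 by (simp add: prob_space)
  define qp where "qp = (\<integral>\<^sup>+x. ennreal (q x) \<partial>m)"
  define qn where "qn = (\<integral>\<^sup>+x. ennreal (- q x) \<partial>m)"
  have fin: "(\<integral>\<^sup>+x. ennreal (norm (q x)) \<partial>m) < \<infinity>" using qint by (simp add: integrable_iff_bounded)
  have "qp \<le> (\<integral>\<^sup>+x. ennreal (norm (q x)) \<partial>m)" unfolding qp_def by (intro nn_integral_mono) auto
  then have qpf: "qp < \<infinity>" using fin by simp
  have "qn \<le> (\<integral>\<^sup>+x. ennreal (norm (q x)) \<partial>m)" unfolding qn_def by (intro nn_integral_mono) auto
  then have qnf: "qn < \<infinity>" using fin by simp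
  obtain a where a: "qp = ennreal a" "a \<ge> 0" using qpf ennreal_cases[of qp] by auto
  obtain b where b: "qn = ennreal b" "b \<ge> 0" using qnf ennreal_cases[of qn] by auto
  have "A + B * M2 m = a - b"
    using real_lebesgue_integral_def[OF qint] intq a b unfolding qp_def qn_def by simp
  define P where "P = (\<integral>\<^sup>+x. ennreal (f x) \<partial>m)"
  define N where "N = (\<integral>\<^sup>+x. ennreal (- f x) \<partial>m)"
  have "N + qn = (\<integral>\<^sup>+x. ennreal (- f x) + ennreal (- q x) \<partial>m)"
    unfolding N_def qn_def by (rule nn_integral_add[symmetric]) auto
  also have "\<dots> \<le> (\<integral>\<^sup>+x. ennreal (f x) + ennreal (q x) + G x \<partial>m)"
    by (intro nn_integral_mono fb)
  also have "\<dots> = P + qp + (\<integral>\<^sup>+x. G x \<partial>m)"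
    unfolding P_def qp_def by (subst nn_integral_add, measurable)+
  also have "\<dots> \<le> P + qp + 1" by (intro add_left_mono G_int)
  finally have "N + ennreal b \<le> P + ennreal a + 1" using a b by simp
  then have ext: "ereal (b - a - 1) \<le> ext_integral m f"
    unfolding ext_integral_def P_def N_def ennreal_max0 using a b by (intro ereal_final) auto
  define T where "T = b - a - 1"
  have "ereal (F m + \<sigma> * T) = ereal (F m) + ereal \<sigma> * ereal T" by simp
  also have "\<dots> \<le> ereal (F m) + ereal \<sigma> * ext_integral m f"
    using ext \<open>\<sigma> > 0\<close> unfolding T_def by (intro add_left_mono ereal_mult_left_mono) auto
  also have "\<dots> = Vfun F \<sigma> \<epsilon> \<xi> (\<lambda>x. exp (- U x)) m"
    unfolding Vfun_def f_def[abs_def] by simp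
  finally have V: "ereal (F m + \<sigma> * T) \<le> Vfun F \<sigma> \<epsilon> \<xi> (\<lambda>x. exp (- U x)) m" .
  have "ereal ((F m + \<sigma> * T) / \<sigma>) = ereal (F m + \<sigma> * T) / ereal \<sigma>" using \<open>\<sigma> > 0\<close> by simp
  also have "\<dots> \<le> Vfun F \<sigma> \<epsilon> \<xi> (\<lambda>x. exp (- U x)) m / ereal \<sigma>"
    using V \<open>\<sigma> > 0\<close> by (intro ereal_divide_right_mono) auto
  finally have V2: "ereal ((F m + \<sigma> * T) / \<sigma>) \<le> Vfun F \<sigma> \<epsilon> \<xi> (\<lambda>x. exp (- U x)) m / ereal \<sigma>" .
  have Fm: "Fmin / \<sigma> \<le> F m / \<sigma>" using F_lb[OF Pm] \<open>\<sigma> > 0\<close> by (intro divide_right_mono) auto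
  have c0b: "c0 \<le> (2 * pi / \<delta>) powr (real DIM('a) / 2)" unfolding c0_def by (rule c0_bound[OF d])
  have "Fmin / \<sigma> + C0 + C1 * M2 m - (2 * pi / \<delta>) powr (real DIM('a) / 2) - 2 * \<delta> * (M2 m + \<epsilon>\<^sup>2 * M2_dens \<xi>)
      \<le> (F m + \<sigma> * T) / \<sigma>"
  proof -
    have e1: "(F m + \<sigma> * T) / \<sigma> = F m / \<sigma> + T" using \<open>\<sigma> > 0\<close> by (simp add: field_simps)
    have e2: "T = C0 - 2 * \<delta> * (\<epsilon>\<^sup>2 * M2_dens \<xi>) - c0 + (C1 - 2 * \<delta>) * M2 m"
      unfolding T_def using \<open>A + B * M2 m = a - b\<close> unfolding A_def B_def by (simp add: algebra_simps)
    have "Fmin / \<sigma> + C0 + C1 * M2 m - (2 * pi / \<delta>) powr (real DIM('a) / 2) - 2 * \<delta> * (M2 m + \<epsilon>\<^sup>2 * M2_dens \<xi>)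
      \<le> F m / \<sigma> + (C0 - 2 * \<delta> * (\<epsilon>\<^sup>2 * M2_dens \<xi>) - c0 + (C1 - 2 * \<delta>) * M2 m)"
      using Fm c0b by (simp add: algebra_simps)
    then show ?thesis by (subst e1, subst e2)
  qed
  then show "ereal (Fmin / \<sigma> + C0 + C1 * M2 m - (2 * pi / \<delta>) powr (real DIM('a) / 2)
             - 2 * \<delta> * (M2 m + \<epsilon>\<^sup>2 * M2_dens \<xi>))
     \<le> Vfun F \<sigma> \<epsilon> \<xi> (\<lambda>x. exp (- U x)) m / ereal \<sigma>"
    using V2 by (meson ereal_less_eq(3) order_trans)
qed


end
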